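(* Let $H$ be an abelian group with an alternating $\mathbb{Z}$-bilinear form $\langle-,-\rangle$, let $z\in\ker\mu$, and let $p\ge1$. There is a natural $\mathbb{Q}$-linear isomorphism \[ \mathbb{Q}\otimes_{\mathbb{Z}}\textstyle\bigwedge^{p-1}_{\mathbb{Z}}(H/\mathbb{Z}z)\longrightarrow \hat C_p(\mathbb{Q}[H])_{(z)}, \] given by $c\otimes(\bar u_1\wedge\cdots\wedge\bar u_{p-1})\mapsto c\,[u_1]\wedge\cdots\wedge[u_{p-1}]\wedge[z-u_1-\cdots-u_{p-1}]$ (classes modulo $\hat I_{p,(z)}$), with inverse induced by $[u_1]\wedge\cdots\wedge[u_p]\mapsto 1\otimes(\bar u_1\wedge\cdots\wedge\bar u_{p-1})$ for $u_1+\cdots+u_p=z$.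
   Context: $\mu:H\to\mathrm{Hom}_{\mathbb{Z}}(H,\mathbb{Z})$, $\mu(x)(y)=\langle x,y\rangle$. $\mathbb{Q}[H]$ is the $\mathbb{Q}$-vector space with basis symbols $[x]$, $x\in H$, with Lie bracket $[[x],[y]]=\langle x,y\rangle[x+y]$; $C_p(\mathbb{Q}[H])=\bigwedge^p_{\mathbb{Q}}\mathbb{Q}[H]$. For $p>0$ and $w\in H$, $C_p(\mathbb{Q}[H])_{(w)}$ is the subspace spanned by $[u_1]\wedge\cdots\wedge[u_p]$ with $u_1+\cdots+u_p=w$. Let $\hat I$ be the ideal of the exterior algebra $\bigwedge\mathbb{Q}[H]$ generated by all $[u+v]\wedge[x]-[u]\wedge[x+v]-[v]\wedge[x+u]$ with $u,v,x\in H$; $\hat I_{p,(w)}=\hat I\cap C_p(\mathbb{Q}[H])_{(w)}$ and $\hat C_p(\mathbb{Q}[H])_{(w)}=C_p(\mathbb{Q}[H])_{(w)}/\hat I_{p,(w)}$. $\bar u$ denotes the class of $u$ in $H/\mathbb{Z}z$. *)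

theory Defs
  imports Complex_Main "HOL-Library.Function_Algebras"
begin

definition zsmul :: "int \<Rightarrow> 'a::ab_group_add \<Rightarrow> 'a" where
  "zsmul k x = (if 0 \<le> k then (\<Sum>i<nat k. x) else - (\<Sum>i<nat (- k). x))"

definition zcoset :: "'a::ab_group_add \<Rightarrow> 'a \<Rightarrow> 'a set" where
  "zcoset z u = {u + zsmul k z | k. True}"

definition quotZ :: "'a::ab_group_add \<Rightarrow> 'a set set" where
  "quotZ z = range (zcoset z)"

definition cplus :: "'a::ab_group_add set \<Rightarrow> 'a set \<Rightarrow> 'a set" where
  "cplus A B = {a + b | a b. a \<in> A \<and> b \<in> B}"

text \<open>Formal Q-linear combinations of words (functions word \<Rightarrow> rat).\<close>
definition delta :: "'b \<Rightarrow> 'b \<Rightarrow> rat" where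
  "delta x = (\<lambda>y. if y = x then 1 else 0)"

definition qscale :: "rat \<Rightarrow> ('b \<Rightarrow> rat) \<Rightarrow> ('b \<Rightarrow> rat)" where
  "qscale c f = (\<lambda>x. c * f x)"

definition qspan :: "('b \<Rightarrow> rat) set \<Rightarrow> ('b \<Rightarrow> rat) set" where
  "qspan S = module.span qscale S"

definition qlinear_on :: "('b \<Rightarrow> rat) set \<Rightarrow> (('b \<Rightarrow> rat) \<Rightarrow> ('c \<Rightarrow> rat)) \<Rightarrow> bool" where
  "qlinear_on S f \<longleftrightarrow> (\<forall>x\<in>S. \<forall>y\<in>S. f (x + y) = f x + f y) \<and>
                      (\<forall>c. \<forall>x\<in>S. f (qscale c x) = qscale c (f x))"

text \<open>Words of length p in H span the degree-p tensor power of Q[H];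
  C_p(Q[H])_(w) is the image of the span of words of length p and weight w.
  The exterior algebra is the tensor algebra modulo the ideal generated by x\<otimes>x,
  whose degree-p part is spanned by alt_rels p; the preimage of the ideal I-hat in
  degree p is spanned by alt_rels p together with ihat_rels p.\<close>
definition C_gen :: "nat \<Rightarrow> 'a::ab_group_add \<Rightarrow> ('a list \<Rightarrow> rat) set" where
  "C_gen p w = qspan {delta us | us. length us = p \<and> sum_list us = w}"

definition alt_rels :: "nat \<Rightarrow> ('a::ab_group_add list \<Rightarrow> rat) set" where
  "alt_rels p =
     {delta (as @ [h, h] @ bs) | as h bs. length as + 2 + length bs = p} \<union>
     {delta (as @ [h, k] @ bs) + delta (as @ [k, h] @ bs) | as h k bs. length as + 2 + length bs = p}"

definition ihat_rels :: "nat \<Rightarrow> ('a::ab_group_add list \<Rightarrow> rat) set" where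
  "ihat_rels p =
     {delta (as @ [u + v, x] @ bs) - delta (as @ [u, x + v] @ bs) - delta (as @ [v, x + u] @ bs)
       | as u v x bs. length as + 2 + length bs = p}"

definition Ihat_lift :: "nat \<Rightarrow> 'a::ab_group_add \<Rightarrow> ('a list \<Rightarrow> rat) set" where
  "Ihat_lift p w = qspan (alt_rels p \<union> ihat_rels p) \<inter> C_gen p w"

text \<open>Source side: Q \<otimes>_Z \<Lambda>^n_Z (H/Zz), presented by generators (words of cosets of
  length n) and the Z-relations (additivity in each slot, vanishing on adjacent repeated
  entries); tensoring with Q gives the Q-span of generators modulo the Q-span of relations.\<close>
definition W_gen :: "'a::ab_group_add \<Rightarrow> nat \<Rightarrow> ('a set list \<Rightarrow> rat) set" where
  "W_gen z n = qspan {delta cs | cs. length cs = n \<and> set cs \<subseteq> quotZ z}"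

definition W_rels :: "'a::ab_group_add \<Rightarrow> nat \<Rightarrow> ('a set list \<Rightarrow> rat) set" where
  "W_rels z n = qspan
     ({delta (as @ [cplus A B] @ bs) - delta (as @ [A] @ bs) - delta (as @ [B] @ bs)
        | as A B bs. length as + 1 + length bs = n \<and> set (as @ [A, B] @ bs) \<subseteq> quotZ z} \<union>
      {delta (as @ [A, A] @ bs)
        | as A bs. length as + 2 + length bs = n \<and> set (as @ [A] @ bs) \<subseteq> quotZ z})"

end

theory Submission
  imports Defs
begin


interpretation Q: module qscale
  by unfold_locales (auto simp: qscale_def fun_eq_iff algebra_simps)

lemma qspan_eq: "qspan S = Q.span S" by (simp add: qspan_def)

definition fs :: "('b \<Rightarrow> rat) \<Rightarrow> bool" where "fs f \<longleftrightarrow> finite {x. f x \<noteq> 0}"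

lemma fs_sub: "Q.subspace {f. fs f}"
proof (rule Q.subspaceI)
  show "0 \<in> {f. fs f}" by (simp add: fs_def)
next
  fix x y :: "'b \<Rightarrow> rat" assume "x \<in> {f. fs f}" "y \<in> {f. fs f}"
  then have "finite ({a. x a \<noteq> 0} \<union> {a. y a \<noteq> 0})" by (simp add: fs_def)
  moreover have "{a. (x+y) a \<noteq> 0} \<subseteq> {a. x a \<noteq> 0} \<union> {a. y a \<noteq> 0}" by auto
  ultimately show "x + y \<in> {f. fs f}" by (auto simp: fs_def intro: finite_subset)
next
  fix c x assume "x \<in> {f. fs (f::'b\<Rightarrow>rat)}"
  then show "qscale c x \<in> {f. fs f}"
    by (auto simp: qscale_def fs_def elim: finite_subset[rotated])
qed

lemma fs_zero: "fs 0" by (simp add: fs_def)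
lemma fs_add: "fs x \<Longrightarrow> fs y \<Longrightarrow> fs (x + y)" using Q.subspace_add[OF fs_sub] by auto
lemma fs_scale: "fs x \<Longrightarrow> fs (qscale c x)" using Q.subspace_scale[OF fs_sub] by auto
lemma fs_diff: "fs x \<Longrightarrow> fs y \<Longrightarrow> fs (x - y)" using Q.subspace_diff[OF fs_sub] by auto

lemma fs_delta: "fs (delta x)" by (simp add: fs_def delta_def)

definition ext :: "('b \<Rightarrow> ('c \<Rightarrow> rat)) \<Rightarrow> ('b \<Rightarrow> rat) \<Rightarrow> ('c \<Rightarrow> rat)" where
  "ext F f = (\<Sum>x\<in>{x. f x \<noteq> 0}. qscale (f x) (F x))"

lemma ext_U: assumes "finite U" "{x. f x \<noteq> 0} \<subseteq> U"
  shows "ext F f = (\<Sum>x\<in>U. qscale (f x) (F x))"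
  unfolding ext_def using assms
  by (intro sum.mono_neutral_left) (auto simp: qscale_def fun_eq_iff)

lemma ext_add: assumes "fs f" "fs g" shows "ext F (f + g) = ext F f + ext F g"
proof -
  let ?U = "{x. f x \<noteq> 0} \<union> {x. g x \<noteq> 0}"
  have U: "finite ?U" using assms by (simp add: fs_def)
  have "ext F (f+g) = (\<Sum>x\<in>?U. qscale ((f+g) x) (F x))" by (rule ext_U[OF U]) auto
  also have "\<dots> = (\<Sum>x\<in>?U. qscale (f x) (F x)) + (\<Sum>x\<in>?U. qscale (g x) (F x))"
    by (simp add: sum.distrib[symmetric] Q.scale_left_distrib)
  also have "\<dots> = ext F f + ext F g" by (simp add: ext_U[OF U])
  finally show ?thesis .
qed

lemma ext_scale: "ext F (qscale c f) = qscale c (ext F f)"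
proof (cases "c = 0")
  case True then show ?thesis by (simp add: ext_def qscale_def fun_eq_iff)
next
  case False
  then have "{x. qscale c f x \<noteq> 0} = {x. f x \<noteq> 0}" by (auto simp: qscale_def)
  then have "ext F (qscale c f) = (\<Sum>x\<in>{x. f x \<noteq> 0}. qscale c (qscale (f x) (F x)))"
    unfolding ext_def by (simp add: qscale_def mult.assoc)
  also have "\<dots> = qscale c (ext F f)" unfolding ext_def by (rule Q.scale_sum_right[symmetric])
  finally show ?thesis .
qed

lemma ext_delta: "ext F (delta x) = F x"
proof -
  have "{y. delta x y \<noteq> 0} = {x}" by (auto simp: delta_def)
  then show ?thesis by (simp add: ext_def delta_def qscale_def)
qed

lemma ext_fs: assumes "\<And>x. fs (F x)" shows "fs (ext F f)"
proof -
  have "(\<Sum>x\<in>{x. f x \<noteq> 0}. qscale (f x) (F x)) \<in> {f. fs f}"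
    by (rule Q.subspace_sum[OF fs_sub]) (use Q.subspace_scale[OF fs_sub] assms in auto)
  then show ?thesis by (simp add: ext_def)
qed

definition lin :: "(('b \<Rightarrow> rat) \<Rightarrow> ('c \<Rightarrow> rat)) \<Rightarrow> bool" where
  "lin L \<longleftrightarrow> (\<forall>f g. fs f \<longrightarrow> fs g \<longrightarrow> L (f + g) = L f + L g) \<and> (\<forall>c f. fs f \<longrightarrow> L (qscale c f) = qscale c (L f))"

lemma lin_ext: "lin (ext F)" by (simp add: lin_def ext_add ext_scale)

lemma lin_image:
  assumes L: "lin L" and V: "Q.subspace V" and R: "\<And>g. g \<in> R \<Longrightarrow> fs g \<and> L g \<in> V"
    and x: "x \<in> Q.span R"
  shows "L x \<in> V"
proof -
  have "Q.subspace {x. fs x \<and> L x \<in> V}"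
    unfolding Q.subspace_def
  proof (intro conjI ballI allI)
    have "L 0 = L (qscale 0 0)" by simp
    also have "\<dots> = qscale 0 (L 0)" using L fs_zero unfolding lin_def by blast
    also have "\<dots> = 0" by (simp add: qscale_def fun_eq_iff)
    finally show "0 \<in> {x. fs x \<and> L x \<in> V}" using fs_zero V by (simp add: Q.subspace_0)
  next
    fix x y assume "x \<in> {x. fs x \<and> L x \<in> V}" "y \<in> {x. fs x \<and> L x \<in> V}"
    then show "x + y \<in> {x. fs x \<and> L x \<in> V}" using L V
      by (auto simp: lin_def fs_add intro: Q.subspace_add)
  next
    fix c x assume "x \<in> {x. fs x \<and> L x \<in> V}"
    then show "qscale c x \<in> {x. fs x \<and> L x \<in> V}" using L V
      by (auto simp: lin_def fs_scale intro: Q.subspace_scale)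
  qed
  then have "Q.span R \<subseteq> {x. fs x \<and> L x \<in> V}" using R by (intro Q.span_minimal) auto
  then show ?thesis using x by auto
qed

lemma span_fs: assumes "\<And>g. g \<in> R \<Longrightarrow> fs g" and "x \<in> Q.span R" shows "fs x"
  using Q.span_minimal[OF _ fs_sub, of R] assms by auto



lemma qscale_neg: "qscale (-c) f = - qscale c f" by (simp add: qscale_def fun_eq_iff)
lemma qscale_one: "qscale 1 f = f" by (simp add: qscale_def fun_eq_iff)

lemma half_in: assumes V: "Q.subspace V" and "x + x \<in> V" shows "x \<in> V"
proof -
  have "qscale (1/2) (x + x) \<in> V" using Q.subspace_scale[OF V assms(2)] .
  moreover have "qscale (1/2) (x + x) = x" by (simp add: qscale_def fun_eq_iff)
  ultimately show ?thesis by simp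
qed

lemma gen_move:
  fixes W :: "'e list \<Rightarrow> ('w \<Rightarrow> rat)"
  assumes V: "Q.subspace V"
    and sw: "\<And>as h k bs. length as + 2 + length bs = n \<Longrightarrow> W (as@[h,k]@bs) + W (as@[k,h]@bs) \<in> V"
  shows "length P + 1 + length Qs + length R = n \<Longrightarrow>
     W (P@[a]@Qs@R) - qscale ((-1)^length Qs) (W (P@Qs@[a]@R)) \<in> V"
proof (induction Qs arbitrary: P)
  case Nil
  have "W (P@[a]@[]@R) - qscale ((-1)^length ([]::'e list)) (W (P@[]@[a]@R)) = 0"
    by (simp add: qscale_def fun_eq_iff)
  then show ?case using Q.subspace_0[OF V] by metis
next
  case (Cons q Qs)
  define X where "X = W (P@[a,q]@(Qs@R))"
  define Y where "Y = W (P@[q,a]@(Qs@R))"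
  define Z where "Z = W (P@(q#Qs)@[a]@R)"
  define s :: rat where "s = (-1)^length Qs"
  have 1: "X + Y \<in> V" unfolding X_def Y_def by (rule sw) (use Cons.prems in simp)
  have 2: "Y - qscale s Z \<in> V"
  proof -
    have "W ((P@[q])@[a]@Qs@R) - qscale ((-1)^length Qs) (W ((P@[q])@Qs@[a]@R)) \<in> V"
      by (rule Cons.IH) (use Cons.prems in simp)
    moreover have "(P@[q])@[a]@Qs@R = P@[q,a]@(Qs@R)" "(P@[q])@Qs@[a]@R = P@(q#Qs)@[a]@R" by simp_all
    ultimately show ?thesis by (simp only: Y_def Z_def s_def)
  qed
  have "X - qscale (-s) Z = (X + Y) - (Y - qscale s Z)" by (simp add: qscale_neg)
  then have "X - qscale (-s) Z \<in> V" using Q.subspace_diff[OF V 1 2] by simp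
  moreover have "(-1::rat)^length (q#Qs) = -s" by (simp add: s_def)
  moreover have "P@[a]@(q#Qs)@R = P@[a,q]@(Qs@R)" by simp
  ultimately show ?case by (simp only: X_def Z_def)
qed

lemma gen_transp:
  fixes W :: "'e list \<Rightarrow> ('w \<Rightarrow> rat)"
  assumes V: "Q.subspace V"
    and sw: "\<And>as h k bs. length as + 2 + length bs = n \<Longrightarrow> W (as@[h,k]@bs) + W (as@[k,h]@bs) \<in> V"
    and len: "length P + 2 + length Qs + length R = n"
  shows "W (P@[a]@Qs@[b]@R) + W (P@[b]@Qs@[a]@R) \<in> V"
proof -
  define s :: rat where "s = (-1)^length Qs"
  define A where "A = W ((P@Qs)@[a,b]@R)"
  define B where "B = W ((P@Qs)@[b,a]@R)"
  have m1: "W (P@[a]@Qs@([b]@R)) - qscale s A \<in> V"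
    using gen_move[where W=W and V=V and n=n, OF V sw, of P Qs "[b]@R" a] len by (simp add: s_def A_def)
  have m2: "W (P@[b]@Qs@([a]@R)) - qscale s B \<in> V"
    using gen_move[where W=W and V=V and n=n, OF V sw, of P Qs "[a]@R" b] len by (simp add: s_def B_def)
  have 3: "A + B \<in> V" unfolding A_def B_def by (rule sw) (use len in simp)
  have "W (P@[a]@Qs@[b]@R) + W (P@[b]@Qs@[a]@R) =
    (W (P@[a]@Qs@([b]@R)) - qscale s A) + (W (P@[b]@Qs@([a]@R)) - qscale s B) + qscale s (A + B)"
    by (simp add: qscale_def fun_eq_iff algebra_simps)
  also have "\<dots> \<in> V" by (rule Q.subspace_add[OF V Q.subspace_add[OF V m1 m2] Q.subspace_scale[OF V 3]])
  finally show ?thesis .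
qed

lemma gen_nonadj:
  fixes W :: "'e list \<Rightarrow> ('w \<Rightarrow> rat)"
  assumes V: "Q.subspace V"
    and sw: "\<And>as h k bs. length as + 2 + length bs = n \<Longrightarrow> W (as@[h,k]@bs) + W (as@[k,h]@bs) \<in> V"
    and len: "length P + 2 + length Qs + length R = n"
  shows "W (P@[a]@Qs@[a]@R) \<in> V"
  using gen_transp[where W=W and V=V and n=n, OF V sw len, of a a] half_in[OF V] by blast

lemma zsmul_0[simp]: "zsmul 0 x = 0" by (simp add: zsmul_def)

lemma zsmul_succ: "zsmul (k+1) x = zsmul k x + x"
proof (cases "k \<ge> 0")
  case True
  then have "nat (k+1) = Suc (nat k)" by simp
  then show ?thesis using True by (simp add: zsmul_def)
next
  case False
  show ?thesis
  proof (cases "k = -1")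
    case True then show ?thesis by (simp add: zsmul_def)
  next
    case F2: False
    with False have "nat (-k) = Suc (nat (-(k+1)))" by simp
    then show ?thesis using False F2 by (simp add: zsmul_def)
  qed
qed

lemma zsmul_pred: "zsmul (k-1) x = zsmul k x - x"
  using zsmul_succ[of "k-1" x] by (simp add: algebra_simps)

lemma zsmul_1[simp]: "zsmul 1 x = x" using zsmul_succ[of 0 x] by simp

lemma zsmul_add: "zsmul (k+l) x = zsmul k x + zsmul l x"
proof (induction l rule: int_induct[where k=0])
  case base then show ?case by simp
next
  case (step1 i)
  have "zsmul (k + (i+1)) x = zsmul ((k+i)+1) x" by (simp add: algebra_simps)
  also have "\<dots> = zsmul (k+i) x + x" by (rule zsmul_succ)
  also have "\<dots> = zsmul k x + (zsmul i x + x)" using step1(2) by (simp add: algebra_simps)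
  also have "\<dots> = zsmul k x + zsmul (i+1) x" by (simp add: zsmul_succ)
  finally show ?case .
next
  case (step2 i)
  have "zsmul (k + (i-1)) x = zsmul ((k+i)-1) x" by (simp add: algebra_simps)
  also have "\<dots> = zsmul (k+i) x - x" by (rule zsmul_pred)
  also have "\<dots> = zsmul k x + (zsmul i x - x)" using step2(2) by (simp add: algebra_simps)
  also have "\<dots> = zsmul k x + zsmul (i-1) x" by (simp add: zsmul_pred)
  finally show ?case .
qed

lemma zsmul_diff: "zsmul (k-l) x = zsmul k x - zsmul l x"
  using zsmul_add[of "k-l" l x] by (simp add: algebra_simps)

lemma zcoset_self: "u \<in> zcoset z u"
  unfolding zcoset_def by (auto intro: exI[of _ 0])

lemma zcoset_shift: "zcoset z (u + zsmul k z) = zcoset z u"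
  unfolding zcoset_def
proof safe
  fix l show "\<exists>m. u + zsmul k z + zsmul l z = u + zsmul m z \<and> True"
    by (intro exI[of _ "k+l"]) (simp add: zsmul_add algebra_simps)
next
  fix l show "\<exists>m. u + zsmul l z = u + zsmul k z + zsmul m z \<and> True"
    by (intro exI[of _ "l-k"]) (simp add: zsmul_diff algebra_simps)
qed

lemma zcoset_eqD: "zcoset z r = zcoset z u \<Longrightarrow> \<exists>k. r = u + zsmul k z"
  using zcoset_self[of r z] by (auto simp: zcoset_def)

lemma zcoset_minus_z: "zcoset z (z - s) = zcoset z (- s)"
  using zcoset_shift[of z "-s" 1] by simp

lemma cplus_zcoset: "cplus (zcoset z a) (zcoset z b) = zcoset z (a+b)"
proof (rule set_eqI, rule iffI)
  fix x assume "x \<in> cplus (zcoset z a) (zcoset z b)"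
  then obtain k l where "x = a + zsmul k z + (b + zsmul l z)" by (auto simp: cplus_def zcoset_def)
  then have "x = a + b + zsmul (k+l) z" by (simp add: zsmul_add algebra_simps)
  then show "x \<in> zcoset z (a+b)" by (auto simp: zcoset_def)
next
  fix x assume "x \<in> zcoset z (a+b)"
  then obtain k where k: "x = a + b + zsmul k z" by (auto simp: zcoset_def)
  have "a + zsmul k z \<in> zcoset z a" by (auto simp: zcoset_def)
  moreover have "b \<in> zcoset z b" by (rule zcoset_self)
  moreover have "x = (a + zsmul k z) + b" using k by (simp add: algebra_simps)
  ultimately show "x \<in> cplus (zcoset z a) (zcoset z b)" unfolding cplus_def by blast
qed



definition Sp :: "nat \<Rightarrow> ('a::ab_group_add list \<Rightarrow> rat) set" where
  "Sp p = Q.span (alt_rels p \<union> ihat_rels p)"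

lemma Sp_sub: "Q.subspace (Sp p)" by (simp add: Sp_def)

lemma S_swap: "length as + 2 + length bs = p \<Longrightarrow> delta (as@[h,k]@bs) + delta (as@[k,h]@bs) \<in> Sp p"
  unfolding Sp_def by (rule Q.span_base) (unfold alt_rels_def, blast)

lemma S_alt: "length as + 2 + length bs = p \<Longrightarrow> delta (as@[h,h]@bs) \<in> Sp p"
  unfolding Sp_def by (rule Q.span_base) (unfold alt_rels_def, blast)

lemma S_ihat: "length as + 2 + length bs = p \<Longrightarrow>
  delta (as @ [u + v, x] @ bs) - delta (as @ [u, x + v] @ bs) - delta (as @ [v, x + u] @ bs) \<in> Sp p"
  unfolding Sp_def by (rule Q.span_base) (unfold ihat_rels_def, blast)

lemma Sp_0[simp]: "0 \<in> Sp p" using Q.subspace_0[OF Sp_sub] .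
lemma Sp_0'[simp]: "(\<lambda>a. 0) \<in> Sp p" using Sp_0 by (simp add: zero_fun_def)
lemma Sp_add: "x \<in> Sp p \<Longrightarrow> y \<in> Sp p \<Longrightarrow> x + y \<in> Sp p" using Q.subspace_add[OF Sp_sub] .
lemma Sp_diff: "x \<in> Sp p \<Longrightarrow> y \<in> Sp p \<Longrightarrow> x - y \<in> Sp p" using Q.subspace_diff[OF Sp_sub] .
lemma Sp_neg: "x \<in> Sp p \<Longrightarrow> - x \<in> Sp p" using Q.subspace_neg[OF Sp_sub] .
lemma Sp_scale: "x \<in> Sp p \<Longrightarrow> qscale c x \<in> Sp p" using Q.subspace_scale[OF Sp_sub] .

lemma S_move: "length P + 1 + length Qs + length R = p \<Longrightarrow>
  delta (P@[a]@Qs@R) - qscale ((-1)^length Qs) (delta (P@Qs@[a]@R)) \<in> Sp p"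
  apply (rule gen_move[where W=delta and V="Sp p" and n=p])
    apply (rule Sp_sub)
   apply (erule S_swap)
  apply assumption
  done

lemma S_transp: "length P + 2 + length Qs + length R = p \<Longrightarrow>
  delta (P@[a]@Qs@[b]@R) + delta (P@[b]@Qs@[a]@R) \<in> Sp p"
  apply (rule gen_transp[where W=delta and V="Sp p" and n=p])
    apply (rule Sp_sub)
   apply (erule S_swap)
  apply assumption
  done

lemma S_nonadj: "length P + 2 + length Qs + length R = p \<Longrightarrow>
  delta (P@[a]@Qs@[a]@R) \<in> Sp p"
  apply (rule gen_nonadj[where W=delta and V="Sp p" and n=p])
    apply (rule Sp_sub)
   apply (erule S_swap)
  apply assumption
  done

definition G :: "'a::ab_group_add \<Rightarrow> 'a list \<Rightarrow> ('a list \<Rightarrow> rat)" where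
  "G z us = delta (us @ [z - sum_list us])"

lemma G1:
  fixes z :: "'a::ab_group_add"
  assumes len: "length xs + 1 + length ys + 1 = p"
  shows "G z (xs@[a+b]@ys) - G z (xs@[a]@ys) - G z (xs@[b]@ys) \<in> Sp p"
proof -
  define c where "c = z - sum_list xs - sum_list ys"
  define s :: rat where "s = (-1)^length ys"
  define Y where "Y t = delta ((xs@ys)@[t, c - t]@[])" for t
  have Gt: "G z (xs@t#ys) = delta (xs@t#ys@[c - t])" for t
    by (simp add: G_def c_def algebra_simps)
  have M: "G z (xs@[t]@ys) - qscale s (Y t) \<in> Sp p" for t
    using S_move[where P=xs and Qs=ys and R="[c-t]" and a=t and p=p] len by (simp add: Gt Y_def s_def)
  have I: "Y (a+b) - Y a - Y b \<in> Sp p"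
  proof -
    have "delta ((xs@ys)@[a+b, (c-(a+b))]@[]) - delta ((xs@ys)@[a, (c-(a+b)) + b]@[])
       - delta ((xs@ys)@[b, (c-(a+b)) + a]@[]) \<in> Sp p"
      by (rule S_ihat) (use len in simp)
    moreover have "(c-(a+b)) + b = c - a" "(c-(a+b)) + a = c - b" by (simp_all add: algebra_simps)
    ultimately show ?thesis by (simp only: Y_def)
  qed
  have "G z (xs@[a+b]@ys) - G z (xs@[a]@ys) - G z (xs@[b]@ys) =
     (G z (xs@[a+b]@ys) - qscale s (Y (a+b))) - (G z (xs@[a]@ys) - qscale s (Y a))
     - (G z (xs@[b]@ys) - qscale s (Y b)) + qscale s (Y (a+b) - Y a - Y b)"
    by (simp add: qscale_def fun_eq_iff algebra_simps)
  also have "\<dots> \<in> Sp p"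
    using M I by (meson Sp_add Sp_diff Sp_scale)
  finally show ?thesis .
qed

lemma G0:
  fixes z :: "'a::ab_group_add"
  assumes len: "length xs + 1 + length ys + 1 = p"
  shows "G z (xs@[0]@ys) \<in> Sp p"
proof -
  have "G z (xs@[0+0]@ys) - G z (xs@[0]@ys) - G z (xs@[0]@ys) \<in> Sp p" by (rule G1[OF len])
  then have "- (G z (xs@[0]@ys)) \<in> Sp p" by simp
  then show ?thesis using Sp_neg by fastforce
qed

lemma Gl:
  fixes z :: "'a::ab_group_add"
  assumes len: "length xs + 1 + length ys + 1 = p" and l: "l \<in> set (xs@ys)"
  shows "G z (xs@[l]@ys) \<in> Sp p"
proof -
  define w where "w = z - sum_list (xs@[l]@ys)"
  have Gw: "G z (xs@[l]@ys) = delta (xs@[l]@ys@[w])" by (simp add: G_def w_def)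
  show ?thesis
  proof (cases "l \<in> set xs")
    case True
    then obtain P R where xs: "xs = P @ l # R" by (meson split_list)
    have "delta (P@[l]@R@[l]@(ys@[w])) \<in> Sp p"
      by (rule S_nonadj) (use len in \<open>simp add: xs\<close>)
    then show ?thesis unfolding Gw using xs by simp
  next
    case False
    then have "l \<in> set ys" using l by simp
    then obtain P R where ys: "ys = P @ l # R" by (meson split_list)
    have "delta (xs@[l]@P@[l]@(R@[w])) \<in> Sp p"
      by (rule S_nonadj) (use len in \<open>simp add: ys\<close>)
    then show ?thesis unfolding Gw using ys by simp
  qed
qed

lemma Gsum:
  fixes z :: "'a::ab_group_add"
  assumes len: "length xs + 1 + length ys + 1 = p"
  shows "set L \<subseteq> set (xs@ys) \<Longrightarrow> G z (xs@[- sum_list L]@ys) \<in> Sp p"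
proof (induction L)
  case Nil
  then show ?case using G0[OF len] by simp
next
  case (Cons l L)
  let ?G = "\<lambda>t. G z (xs@[t]@ys)"
  have 1: "?G (-l + - sum_list L) - ?G (-l) - ?G (- sum_list L) \<in> Sp p" by (rule G1[OF len])
  have 2: "?G (l + -l) - ?G l - ?G (-l) \<in> Sp p" by (rule G1[OF len])
  have 3: "?G 0 \<in> Sp p" by (rule G0[OF len])
  have 4: "?G l \<in> Sp p" using Gl[OF len] Cons.prems by simp
  have 5: "?G (- sum_list L) \<in> Sp p" using Cons by simp
  have "?G (- sum_list (l#L)) = (?G (-l + - sum_list L) - ?G (-l) - ?G (- sum_list L))
      - (?G (l + -l) - ?G l - ?G (-l)) + ?G 0 - ?G l + ?G (- sum_list L)"
    by (simp add: algebra_simps)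
  also have "\<dots> \<in> Sp p" using 1 2 3 4 5 by (meson Sp_add Sp_diff)
  finally show ?case .
qed

lemma Gz:
  fixes z :: "'a::ab_group_add"
  assumes len: "length xs + 1 + length ys + 1 = p"
  shows "G z (xs@[z]@ys) \<in> Sp p"
proof -
  define w where "w = z - sum_list (xs@[z]@ys)"
  have w: "w = - sum_list (xs@ys)" by (simp add: w_def algebra_simps)
  have T: "delta (xs@[z]@ys@[w]@[]) + delta (xs@[w]@ys@[z]@[]) \<in> Sp p"
    by (rule S_transp) (use len in simp)
  have e1: "delta (xs @ z # ys @ [w]) = G z (xs @ z # ys)" by (simp add: G_def w_def)
  have e2: "delta (xs @ w # ys @ [z]) = G z (xs @ w # ys)" by (simp add: G_def w algebra_simps)
  have "G z (xs@[w]@ys) \<in> Sp p" using Gsum[OF len, of "xs@ys"] by (simp add: w)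
  then have "(G z (xs@[z]@ys) + G z (xs@[w]@ys)) - G z (xs@[w]@ys) \<in> Sp p"
    using T by (intro Sp_diff) (auto simp: e1 e2)
  then show ?thesis by simp
qed

lemma G2k:
  fixes z :: "'a::ab_group_add"
  assumes len: "length xs + 1 + length ys + 1 = p"
  shows "G z (xs@[u + zsmul k z]@ys) - G z (xs@[u]@ys) \<in> Sp p"
proof (induction k rule: int_induct[where k=0])
  case base then show ?case by simp
next
  case (step1 i)
  let ?G = "\<lambda>t. G z (xs@[t]@ys)"
  have 1: "?G ((u + zsmul i z) + z) - ?G (u + zsmul i z) - ?G z \<in> Sp p" by (rule G1[OF len])
  have e: "u + zsmul (i+1) z = (u + zsmul i z) + z" by (subst zsmul_succ) (simp add: algebra_simps)
  have "?G (u + zsmul (i+1) z) - ?G u = (?G ((u + zsmul i z) + z) - ?G (u + zsmul i z) - ?G z)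
      + (?G (u + zsmul i z) - ?G u) + ?G z" by (simp add: e)
  also have "\<dots> \<in> Sp p" using 1 step1(2) Gz[OF len] by (meson Sp_add)
  finally show ?case .
next
  case (step2 i)
  let ?G = "\<lambda>t. G z (xs@[t]@ys)"
  have 1: "?G ((u + zsmul (i-1) z) + z) - ?G (u + zsmul (i-1) z) - ?G z \<in> Sp p" by (rule G1[OF len])
  have e: "u + zsmul i z = (u + zsmul (i-1) z) + z" by (subst zsmul_pred) (simp add: algebra_simps)
  have "?G (u + zsmul (i-1) z) - ?G u = (?G (u + zsmul i z) - ?G u)
      - (?G ((u + zsmul (i-1) z) + z) - ?G (u + zsmul (i-1) z) - ?G z) - ?G z"
    by (simp add: e)
  also have "\<dots> \<in> Sp p" using 1 step2(2) Gz[OF len] by (meson Sp_diff)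
  finally show ?case .
qed

lemma G2:
  fixes z :: "'a::ab_group_add"
  assumes len: "length xs + 1 + length ys + 1 = p" and eq: "zcoset z r = zcoset z u"
  shows "G z (xs@[r]@ys) - G z (xs@[u]@ys) \<in> Sp p"
  using zcoset_eqD[OF eq] G2k[OF len] by auto

lemma Glist:
  fixes z :: "'a::ab_group_add"
  assumes "list_all2 (\<lambda>r u. zcoset z r = zcoset z u) rs us"
  shows "length xs + length rs + 1 = p \<Longrightarrow> G z (xs@rs) - G z (xs@us) \<in> Sp p"
  using assms
proof (induction rs us arbitrary: xs rule: list_all2_induct)
  case Nil then show ?case by simp
next
  case (Cons r rs u us)
  have 1: "G z (xs@[r]@rs) - G z (xs@[u]@rs) \<in> Sp p" by (rule G2) (use Cons in simp_all)
  have 2: "G z ((xs@[u])@rs) - G z ((xs@[u])@us) \<in> Sp p" by (rule Cons.IH) (use Cons in simp)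
  have "G z (xs@r#rs) - G z (xs@u#us) = (G z (xs@[r]@rs) - G z (xs@[u]@rs)) + (G z ((xs@[u])@rs) - G z ((xs@[u])@us))"
    by simp
  also have "\<dots> \<in> Sp p" using 1 2 by (rule Sp_add)
  finally show ?case .
qed



definition E :: "'a::ab_group_add \<Rightarrow> 'a list \<Rightarrow> ('a set list \<Rightarrow> rat)" where
  "E z us = delta (map (zcoset z) us)"

lemma Wr_def: "W_rels z n = Q.span
     ({delta (as @ [cplus A B] @ bs) - delta (as @ [A] @ bs) - delta (as @ [B] @ bs)
        | as A B bs. length as + 1 + length bs = n \<and> set (as @ [A, B] @ bs) \<subseteq> quotZ z} \<union>
      {delta (as @ [A, A] @ bs)
        | as A bs. length as + 2 + length bs = n \<and> set (as @ [A] @ bs) \<subseteq> quotZ z})"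
  by (simp add: W_rels_def qspan_eq)

lemma T_sub: "Q.subspace (W_rels z n)" by (simp add: Wr_def)
lemma T_0[simp]: "0 \<in> W_rels z n" using Q.subspace_0[OF T_sub] .
lemma T_0'[simp]: "(\<lambda>a. 0) \<in> W_rels z n" using T_0 by (simp add: zero_fun_def)
lemma T_add: "x \<in> W_rels z n \<Longrightarrow> y \<in> W_rels z n \<Longrightarrow> x + y \<in> W_rels z n" using Q.subspace_add[OF T_sub] .
lemma T_diff: "x \<in> W_rels z n \<Longrightarrow> y \<in> W_rels z n \<Longrightarrow> x - y \<in> W_rels z n" using Q.subspace_diff[OF T_sub] .
lemma T_neg: "x \<in> W_rels z n \<Longrightarrow> - x \<in> W_rels z n" using Q.subspace_neg[OF T_sub] .

lemma T_gen_add: "length as + 1 + length bs = n \<Longrightarrow> set (as @ [A, B] @ bs) \<subseteq> quotZ z \<Longrightarrow>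
   delta (as @ [cplus A B] @ bs) - delta (as @ [A] @ bs) - delta (as @ [B] @ bs) \<in> W_rels z n"
  unfolding Wr_def by (rule Q.span_base) blast

lemma T_gen_alt: "length as + 2 + length bs = n \<Longrightarrow> set (as @ [A] @ bs) \<subseteq> quotZ z \<Longrightarrow>
   delta (as @ [A, A] @ bs) \<in> W_rels z n"
  unfolding Wr_def by (rule Q.span_base) blast

lemma zc_quot[simp]: "zcoset z u \<in> quotZ z" by (simp add: quotZ_def)
lemma zc_img[simp]: "zcoset z ` A \<subseteq> quotZ z" by (auto simp: quotZ_def)

lemma E_add: "length xs + 1 + length ys = n \<Longrightarrow>
  E z (xs@[a+b]@ys) - E z (xs@[a]@ys) - E z (xs@[b]@ys) \<in> W_rels z n"
  using T_gen_add[of "map (zcoset z) xs" "map (zcoset z) ys" n "zcoset z a" "zcoset z b" z]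
  by (auto simp: E_def cplus_zcoset zc_quot)

lemma E_alt: "length xs + 2 + length ys = n \<Longrightarrow> E z (xs@[a,a]@ys) \<in> W_rels z n"
  using T_gen_alt[of "map (zcoset z) xs" "map (zcoset z) ys" n "zcoset z a" z]
  by (auto simp: E_def zc_quot)

lemma E_swap:
  assumes len: "length xs + 2 + length ys = n"
  shows "E z (xs@[a,b]@ys) + E z (xs@[b,a]@ys) \<in> W_rels z n"
proof -
  have X: "E z (xs@[a+b,a+b]@ys) \<in> W_rels z n" by (rule E_alt) (use len in simp)
  have A1: "E z (xs@[a+b]@((a+b)#ys)) - E z (xs@[a]@((a+b)#ys)) - E z (xs@[b]@((a+b)#ys)) \<in> W_rels z n"
    by (rule E_add) (use len in simp)
  have A2: "E z ((xs@[a])@[a+b]@ys) - E z ((xs@[a])@[a]@ys) - E z ((xs@[a])@[b]@ys) \<in> W_rels z n"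
    by (rule E_add) (use len in simp)
  have A3: "E z ((xs@[b])@[a+b]@ys) - E z ((xs@[b])@[a]@ys) - E z ((xs@[b])@[b]@ys) \<in> W_rels z n"
    by (rule E_add) (use len in simp)
  have Xa: "E z (xs@[a,a]@ys) \<in> W_rels z n" by (rule E_alt) (use len in simp)
  have Xb: "E z (xs@[b,b]@ys) \<in> W_rels z n" by (rule E_alt) (use len in simp)
  have "E z (xs@[a,b]@ys) + E z (xs@[b,a]@ys) =
     E z (xs@[a+b,a+b]@ys) - (E z (xs@[a+b]@((a+b)#ys)) - E z (xs@[a]@((a+b)#ys)) - E z (xs@[b]@((a+b)#ys)))
     - (E z ((xs@[a])@[a+b]@ys) - E z ((xs@[a])@[a]@ys) - E z ((xs@[a])@[b]@ys))
     - (E z ((xs@[b])@[a+b]@ys) - E z ((xs@[b])@[a]@ys) - E z ((xs@[b])@[b]@ys))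
     - E z (xs@[a,a]@ys) - E z (xs@[b,b]@ys)"
    by (simp add: algebra_simps)
  also have "\<dots> \<in> W_rels z n" using X A1 A2 A3 Xa Xb by (meson T_diff)
  finally show ?thesis .
qed

lemma T_nonadj: "length P + 2 + length Qs + length R = n \<Longrightarrow>
  E z (P@[a]@Qs@[a]@R) \<in> W_rels z n"
  apply (rule gen_nonadj[where W="E z" and V="W_rels z n" and n=n])
    apply (rule T_sub)
   apply (erule E_swap)
  apply assumption
  done

lemma E0:
  assumes len: "length xs + 1 + length ys = n"
  shows "E z (xs@[0]@ys) \<in> W_rels z n"
proof -
  have "E z (xs@[0+0]@ys) - E z (xs@[0]@ys) - E z (xs@[0]@ys) \<in> W_rels z n" by (rule E_add[OF len])
  then have "- (E z (xs@[0]@ys)) \<in> W_rels z n" by simp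
  then show ?thesis using T_neg by fastforce
qed

lemma Esum:
  assumes len: "length xs + 1 = n"
  shows "set L \<subseteq> set xs \<Longrightarrow> E z (xs@[- sum_list L]) \<in> W_rels z n"
proof (induction L)
  case Nil
  then show ?case using E0[of xs "[]" n z] len by simp
next
  case (Cons l L)
  let ?G = "\<lambda>t. E z (xs@[t]@[])"
  have 1: "?G (-l + - sum_list L) - ?G (-l) - ?G (- sum_list L) \<in> W_rels z n" by (rule E_add) (use len in simp)
  have 2: "?G (l + -l) - ?G l - ?G (-l) \<in> W_rels z n" by (rule E_add) (use len in simp)
  have 3: "?G 0 \<in> W_rels z n" by (rule E0) (use len in simp)
  have 4: "?G l \<in> W_rels z n"
  proof -
    obtain P R where xs: "xs = P @ l # R" using Cons.prems by (meson list.set_intros(1) split_list subsetD)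
    have "E z (P@[l]@R@[l]@[]) \<in> W_rels z n" by (rule T_nonadj) (use len xs in simp)
    then show ?thesis using xs by simp
  qed
  have 5: "?G (- sum_list L) \<in> W_rels z n" using Cons by simp
  have "?G (- sum_list (l#L)) = (?G (-l + - sum_list L) - ?G (-l) - ?G (- sum_list L))
      - (?G (l + -l) - ?G l - ?G (-l)) + ?G 0 - ?G l + ?G (- sum_list L)"
    by (simp add: algebra_simps)
  also have "\<dots> \<in> W_rels z n" using 1 2 3 4 5 by (meson T_add T_diff)
  finally show ?case by simp
qed

lemma Ez:
  assumes len: "length xs + 1 = n"
  shows "E z (xs@[z - sum_list xs]) \<in> W_rels z n"
  using Esum[OF len, of xs z] by (simp add: E_def zcoset_minus_z)



definition Fpsi :: "nat \<Rightarrow> 'a::ab_group_add \<Rightarrow> 'a list \<Rightarrow> ('a set list \<Rightarrow> rat)" where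
  "Fpsi p z w = (if length w = p \<and> sum_list w = z then E z (take (p-1) w) else 0)"

lemma F_eq: "length w = p \<Longrightarrow> sum_list w = z \<Longrightarrow> Fpsi p z w = E z (take (p-1) w)"
  by (simp add: Fpsi_def)

lemma F_zero: "sum_list w \<noteq> z \<Longrightarrow> Fpsi p z w = 0"
  by (simp add: Fpsi_def)

lemma take_snoc: "n = length L \<Longrightarrow> take n (L @ [b]) = L" by simp

lemma Psi_alt:
  assumes len: "length as + 2 + length bs = p"
  shows "Fpsi p z (as@[h,h]@bs) \<in> W_rels z (p-1)"
proof (cases "sum_list (as@[h,h]@bs) = z")
  case False then show ?thesis by (simp add: Fpsi_def)
next
  case True
  show ?thesis
  proof (cases bs rule: rev_exhaust)
    case Nil
    have tk: "take (p-1) (as@[h,h]@bs) = as@[h]" by (simp add: len[symmetric] Nil)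
    have se: "h + h = z - sum_list as" using True Nil by (simp add: algebra_simps)
    have a: "E z (as@[h+h]@[]) - E z (as@[h]@[]) - E z (as@[h]@[]) \<in> W_rels z (p-1)"
      by (rule E_add) (use len Nil in simp)
    have b: "E z (as@[h+h]) \<in> W_rels z (p-1)" unfolding se by (rule Ez) (use len Nil in simp)
    have "E z (as@[h]) + E z (as@[h]) = E z (as@[h+h]) - (E z (as@[h+h]@[]) - E z (as@[h]@[]) - E z (as@[h]@[]))"
      by simp
    also have "\<dots> \<in> W_rels z (p-1)" using b a by (rule T_diff)
    finally have "E z (as@[h]) \<in> W_rels z (p-1)" by (rule half_in[OF T_sub])
    moreover have l: "length (as@[h,h]@bs) = p" using len by simp
    ultimately show ?thesis by (simp only: F_eq[OF l True] tk)
  next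
    case (snoc bs' b)
    have tk: "take (p-1) (as@[h,h]@bs) = as@[h,h]@bs'"
      by (simp add: len[symmetric] snoc)
    have "E z (as@[h,h]@bs') \<in> W_rels z (p-1)" by (rule E_alt) (use len snoc in simp)
    moreover have l: "length (as@[h,h]@bs) = p" using len by simp
    ultimately show ?thesis by (simp only: F_eq[OF l True] tk)
  qed
qed

lemma Psi_swap:
  assumes len: "length as + 2 + length bs = p"
  shows "Fpsi p z (as@[h,k]@bs) + Fpsi p z (as@[k,h]@bs) \<in> W_rels z (p-1)"
proof -
  have se: "sum_list (as@[k,h]@bs) = sum_list (as@[h,k]@bs)" by (simp add: algebra_simps)
  show ?thesis
  proof (cases "sum_list (as@[h,k]@bs) = z")
    case False
    have F2: "sum_list (as@[k,h]@bs) \<noteq> z" using False se by metis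
    show ?thesis by (simp only: F_zero[OF False] F_zero[OF F2]) simp
  next
    case True
    have True2: "sum_list (as@[k,h]@bs) = z" using True se by simp
    have l1: "length (as@[h,k]@bs) = p" and l2: "length (as@[k,h]@bs) = p" using len by simp_all
    show ?thesis
    proof (cases bs rule: rev_exhaust)
      case Nil
      have tk1: "take (p-1) (as@[h,k]@bs) = as@[h]" by (simp add: len[symmetric] Nil)
      have tk2: "take (p-1) (as@[k,h]@bs) = as@[k]" by (simp add: len[symmetric] Nil)
      have se2: "h + k = z - sum_list as" using True Nil by (simp add: algebra_simps)
      have a: "E z (as@[h+k]@[]) - E z (as@[h]@[]) - E z (as@[k]@[]) \<in> W_rels z (p-1)"
        by (rule E_add) (use len Nil in simp)
      have b: "E z (as@[h+k]) \<in> W_rels z (p-1)" unfolding se2 by (rule Ez) (use len Nil in simp)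
      have "E z (as@[h]) + E z (as@[k]) = E z (as@[h+k]) - (E z (as@[h+k]@[]) - E z (as@[h]@[]) - E z (as@[k]@[]))"
        by simp
      also have "\<dots> \<in> W_rels z (p-1)" using b a by (rule T_diff)
      finally show ?thesis by (simp only: F_eq[OF l1 True] F_eq[OF l2 True2] tk1 tk2)
    next
      case (snoc bs' b)
      have tk1: "take (p-1) (as@[h,k]@bs) = as@[h,k]@bs'" by (simp add: len[symmetric] snoc)
      have tk2: "take (p-1) (as@[k,h]@bs) = as@[k,h]@bs'" by (simp add: len[symmetric] snoc)
      have "E z (as@[h,k]@bs') + E z (as@[k,h]@bs') \<in> W_rels z (p-1)" by (rule E_swap) (use len snoc in simp)
      then show ?thesis by (simp only: F_eq[OF l1 True] F_eq[OF l2 True2] tk1 tk2)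
    qed
  qed
qed

lemma Psi_ihat:
  assumes len: "length as + 2 + length bs = p"
  shows "Fpsi p z (as@[u+v,x]@bs) - Fpsi p z (as@[u,x+v]@bs) - Fpsi p z (as@[v,x+u]@bs) \<in> W_rels z (p-1)"
proof -
  have se2: "sum_list (as@[u,x+v]@bs) = sum_list (as@[u+v,x]@bs)" by (simp add: algebra_simps)
  have se3: "sum_list (as@[v,x+u]@bs) = sum_list (as@[u+v,x]@bs)" by (simp add: algebra_simps)
  show ?thesis
  proof (cases "sum_list (as@[u+v,x]@bs) = z")
    case False
    have F2: "sum_list (as@[u,x+v]@bs) \<noteq> z" using False se2 by metis
    have F3: "sum_list (as@[v,x+u]@bs) \<noteq> z" using False se3 by metis
    show ?thesis by (simp only: F_zero[OF False] F_zero[OF F2] F_zero[OF F3]) simp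
  next
    case True
    have T2: "sum_list (as@[u,x+v]@bs) = z" using True se2 by simp
    have T3: "sum_list (as@[v,x+u]@bs) = z" using True se3 by simp
    have l1: "length (as@[u+v,x]@bs) = p" and l2: "length (as@[u,x+v]@bs) = p"
      and l3: "length (as@[v,x+u]@bs) = p" using len by simp_all
    show ?thesis
    proof (cases bs rule: rev_exhaust)
      case Nil
      have tk1: "take (p-1) (as@[u+v,x]@bs) = as@[u+v]@[]" by (simp add: len[symmetric] Nil)
      have tk2: "take (p-1) (as@[u,x+v]@bs) = as@[u]@[]" by (simp add: len[symmetric] Nil)
      have tk3: "take (p-1) (as@[v,x+u]@bs) = as@[v]@[]" by (simp add: len[symmetric] Nil)
      have "E z (as@[u+v]@[]) - E z (as@[u]@[]) - E z (as@[v]@[]) \<in> W_rels z (p-1)"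
        by (rule E_add) (use len Nil in simp)
      then show ?thesis by (simp only: F_eq[OF l1 True] F_eq[OF l2 T2] F_eq[OF l3 T3] tk1 tk2 tk3)
    next
      case (snoc bs' b)
      have tk1: "take (p-1) (as@[u+v,x]@bs) = as@[u+v,x]@bs'" by (simp add: len[symmetric] snoc)
      have tk2: "take (p-1) (as@[u,x+v]@bs) = as@[u,x+v]@bs'" by (simp add: len[symmetric] snoc)
      have tk3: "take (p-1) (as@[v,x+u]@bs) = as@[v,x+u]@bs'" by (simp add: len[symmetric] snoc)
      have A1: "E z (as@[u+v]@(x#bs')) - E z (as@[u]@(x#bs')) - E z (as@[v]@(x#bs')) \<in> W_rels z (p-1)"
        by (rule E_add) (use len snoc in simp)
      have A2: "E z ((as@[u])@[x+v]@bs') - E z ((as@[u])@[x]@bs') - E z ((as@[u])@[v]@bs') \<in> W_rels z (p-1)"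
        by (rule E_add) (use len snoc in simp)
      have A3: "E z ((as@[v])@[x+u]@bs') - E z ((as@[v])@[x]@bs') - E z ((as@[v])@[u]@bs') \<in> W_rels z (p-1)"
        by (rule E_add) (use len snoc in simp)
      have Sw: "E z (as@[u,v]@bs') + E z (as@[v,u]@bs') \<in> W_rels z (p-1)"
        by (rule E_swap) (use len snoc in simp)
      have "E z (as@[u+v,x]@bs') - E z (as@[u,x+v]@bs') - E z (as@[v,x+u]@bs') =
         (E z (as@[u+v]@(x#bs')) - E z (as@[u]@(x#bs')) - E z (as@[v]@(x#bs')))
         - (E z ((as@[u])@[x+v]@bs') - E z ((as@[u])@[x]@bs') - E z ((as@[u])@[v]@bs'))
         - (E z ((as@[v])@[x+u]@bs') - E z ((as@[v])@[x]@bs') - E z ((as@[v])@[u]@bs'))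
         - (E z (as@[u,v]@bs') + E z (as@[v,u]@bs'))"
        by (simp add: algebra_simps)
      also have "\<dots> \<in> W_rels z (p-1)" using A1 A2 A3 Sw by (meson T_diff)
      finally show ?thesis by (simp only: F_eq[OF l1 True] F_eq[OF l2 T2] F_eq[OF l3 T3] tk1 tk2 tk3)
    qed
  qed
qed



lemma lin_diff: assumes "lin L" "fs f" "fs g" shows "L (f - g) = L f - L g"
proof -
  have "L ((f - g) + g) = L (f - g) + L g"
    using assms(1) fs_diff[OF assms(2,3)] assms(3) unfolding lin_def by blast
  then show ?thesis by (simp add: algebra_simps)
qed

lemma lin_add: "lin L \<Longrightarrow> fs f \<Longrightarrow> fs g \<Longrightarrow> L (f + g) = L f + L g"
  unfolding lin_def by blast

lemma lin_comp_id:
  assumes "lin L1" "lin L2" "\<And>f. fs (L1 f)"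
  shows "lin (\<lambda>x. L2 (L1 x) - x)"
  unfolding lin_def
proof (intro conjI allI impI)
  fix f g :: "'a \<Rightarrow> rat" assume f: "fs f" and g: "fs g"
  have "L1 (f + g) = L1 f + L1 g" using assms(1) f g unfolding lin_def by blast
  moreover have "L2 (L1 f + L1 g) = L2 (L1 f) + L2 (L1 g)" using assms(2,3) unfolding lin_def by blast
  ultimately show "L2 (L1 (f + g)) - (f + g) = L2 (L1 f) - f + (L2 (L1 g) - g)" by (simp add: algebra_simps)
next
  fix c and f :: "'a \<Rightarrow> rat" assume f: "fs f"
  have "L1 (qscale c f) = qscale c (L1 f)" using assms(1) f unfolding lin_def by blast
  moreover have "L2 (qscale c (L1 f)) = qscale c (L2 (L1 f))" using assms(2,3) unfolding lin_def by blast
  ultimately have "L2 (L1 (qscale c f)) = qscale c (L2 (L1 f))" by simp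
  then show "L2 (L1 (qscale c f)) - qscale c f = qscale c (L2 (L1 f) - f)"
    by (simp add: qscale_def fun_eq_iff algebra_simps)
qed

lemma lin_qlinear: "lin L \<Longrightarrow> (\<And>x. x \<in> S \<Longrightarrow> fs x) \<Longrightarrow> qlinear_on S L"
  unfolding lin_def qlinear_on_def by auto

definition rep :: "'a::ab_group_add \<Rightarrow> 'a set \<Rightarrow> 'a" where
  "rep z A = (SOME u. A = zcoset z u)"

lemma rep_zc: "A \<in> quotZ z \<Longrightarrow> zcoset z (rep z A) = A"
  unfolding rep_def quotZ_def by (metis (mono_tags, lifting) imageE someI_ex)

lemma Cg_def: "C_gen p w = Q.span {delta us | us. length us = p \<and> sum_list us = w}"
  by (simp add: C_gen_def qspan_eq)

lemma Ih_def: "Ihat_lift p w = Sp p \<inter> C_gen p w"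
  by (simp add: Ihat_lift_def Sp_def qspan_eq)

lemma C_sub: "Q.subspace (C_gen p w)" by (simp add: Cg_def)
lemma Ih_sub: "Q.subspace (Ihat_lift p w)" unfolding Ih_def using Sp_sub C_sub by (rule Q.subspace_inter)

lemma G_C: "length us + 1 = p \<Longrightarrow> G z us \<in> C_gen p z"
  unfolding Cg_def G_def by (rule Q.span_base) auto

lemma C_diff: "x \<in> C_gen p w \<Longrightarrow> y \<in> C_gen p w \<Longrightarrow> x - y \<in> C_gen p w" using Q.subspace_diff[OF C_sub] .

lemma fs_G: "fs (G z us)" by (simp add: G_def fs_delta)
lemma fs_F: "fs (Fpsi p z w)" by (simp add: Fpsi_def E_def fs_delta fs_zero)

lemma la2: "list_all2 (\<lambda>r u. zcoset z r = zcoset z u) (map (rep z) (map (zcoset z) us)) us"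
  by (induction us) (auto simp: rep_zc zc_quot)

lemma Wg_def: "W_gen z n = Q.span {delta cs | cs. length cs = n \<and> set cs \<subseteq> quotZ z}"
  by (simp add: W_gen_def qspan_eq)

theorem proposition3p2:
  fixes form :: "'a::ab_group_add \<Rightarrow> 'a \<Rightarrow> int" and z :: 'a and p :: nat
  assumes bilin_l: "\<forall>x x' y. form (x + x') y = form x y + form x' y"
    and bilin_r: "\<forall>x y y'. form x (y + y') = form x y + form x y'"
    and alternating: "\<forall>x. form x x = 0"
    and z_ker: "\<forall>y. form z y = 0"
    and p_pos: "p \<ge> 1"
  shows "\<exists>\<Phi> \<Psi>.
     qlinear_on (W_gen z (p - 1)) \<Phi> \<and>
     \<Phi> ` W_gen z (p - 1) \<subseteq> C_gen p z \<and>
     \<Phi> ` W_rels z (p - 1) \<subseteq> Ihat_lift p z \<and>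
     (\<forall>us. length us = p - 1 \<longrightarrow>
        \<Phi> (delta (map (zcoset z) us)) - delta (us @ [z - sum_list us]) \<in> Ihat_lift p z) \<and>
     qlinear_on (C_gen p z) \<Psi> \<and>
     \<Psi> ` C_gen p z \<subseteq> W_gen z (p - 1) \<and>
     \<Psi> ` Ihat_lift p z \<subseteq> W_rels z (p - 1) \<and>
     (\<forall>us. length us = p \<and> sum_list us = z \<longrightarrow>
        \<Psi> (delta us) = delta (map (zcoset z) (take (p - 1) us))) \<and>
     (\<forall>x\<in>W_gen z (p - 1). \<Psi> (\<Phi> x) - x \<in> W_rels z (p - 1)) \<and>
     (\<forall>y\<in>C_gen p z. \<Phi> (\<Psi> y) - y \<in> Ihat_lift p z)"
proof -
  define \<Phi> where "\<Phi> = ext (\<lambda>cs. G z (map (rep z) cs))"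
  define \<Psi> where "\<Psi> = ext (Fpsi p z)"
  have linP: "lin \<Phi>" and linS: "lin \<Psi>" unfolding \<Phi>_def \<Psi>_def by (rule lin_ext)+
  have fsP: "fs (\<Phi> f)" for f unfolding \<Phi>_def by (rule ext_fs) (rule fs_G)
  have fsS: "fs (\<Psi> f)" for f unfolding \<Psi>_def by (rule ext_fs) (rule fs_F)
  have Pd: "\<Phi> (delta cs) = G z (map (rep z) cs)" for cs by (simp add: \<Phi>_def ext_delta)
  have Sd: "\<Psi> (delta w) = Fpsi p z w" for w by (simp add: \<Psi>_def ext_delta)
  have fsWg: "x \<in> W_gen z (p-1) \<Longrightarrow> fs x" for x
    unfolding Wg_def by (rule span_fs) (auto simp: fs_delta)
  have fsCg: "x \<in> C_gen p z \<Longrightarrow> fs x" for x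
    unfolding Cg_def by (rule span_fs) (auto simp: fs_delta)
  have pl: "p - 1 + 1 = p" using p_pos by simp
  have c4: "\<Phi> (delta (map (zcoset z) us)) - delta (us @ [z - sum_list us]) \<in> Ihat_lift p z"
    if lus: "length us = p - 1" for us
  proof -
    have e: "\<Phi> (delta (map (zcoset z) us)) - delta (us @ [z - sum_list us])
        = G z ([] @ map (rep z) (map (zcoset z) us)) - G z ([] @ us)"
      by (simp add: Pd G_def)
    have "G z ([] @ map (rep z) (map (zcoset z) us)) - G z ([] @ us) \<in> Sp p"
      by (rule Glist[OF la2]) (use lus pl in simp)
    moreover have "G z ([] @ map (rep z) (map (zcoset z) us)) - G z ([] @ us) \<in> C_gen p z"
      by (intro C_diff G_C) (use lus pl in simp_all)
    ultimately show ?thesis unfolding e Ih_def by simp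
  qed
  have c2: "\<Phi> ` W_gen z (p - 1) \<subseteq> C_gen p z"
  proof
    fix y assume "y \<in> \<Phi> ` W_gen z (p - 1)"
    then obtain x where x: "x \<in> W_gen z (p-1)" "y = \<Phi> x" by auto
    have "\<Phi> x \<in> C_gen p z"
      by (rule lin_image[OF linP C_sub _ x(1)[unfolded Wg_def]])
         (use p_pos in \<open>auto simp: fs_delta Pd intro!: G_C\<close>)
    then show "y \<in> C_gen p z" using x by simp
  qed
  have c3: "\<Phi> ` W_rels z (p - 1) \<subseteq> Ihat_lift p z"
  proof
    fix y assume "y \<in> \<Phi> ` W_rels z (p - 1)"
    then obtain x where x: "x \<in> W_rels z (p-1)" "y = \<Phi> x" by auto
    have "\<Phi> x \<in> Ihat_lift p z"
    proof (rule lin_image[OF linP Ih_sub _ x(1)[unfolded Wr_def]])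
      fix g assume "g \<in> {delta (as @ [cplus A B] @ bs) - delta (as @ [A] @ bs) - delta (as @ [B] @ bs)
        | as A B bs. length as + 1 + length bs = p - 1 \<and> set (as @ [A, B] @ bs) \<subseteq> quotZ z} \<union>
      {delta (as @ [A, A] @ bs)
        | as A bs. length as + 2 + length bs = p - 1 \<and> set (as @ [A] @ bs) \<subseteq> quotZ z}"
      then show "fs g \<and> \<Phi> g \<in> Ihat_lift p z"
      proof
        assume "g \<in> {delta (as @ [cplus A B] @ bs) - delta (as @ [A] @ bs) - delta (as @ [B] @ bs)
        | as A B bs. length as + 1 + length bs = p - 1 \<and> set (as @ [A, B] @ bs) \<subseteq> quotZ z}"
        then obtain as A B bs where g: "g = delta (as @ [cplus A B] @ bs) - delta (as @ [A] @ bs) - delta (as @ [B] @ bs)"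
          and len: "length as + 1 + length bs = p - 1" and st: "set (as @ [A, B] @ bs) \<subseteq> quotZ z" by blast
        have fsg: "fs g" unfolding g by (intro fs_diff fs_delta)
        define ra where "ra = map (rep z) as"
        define rb where "rb = map (rep z) bs"
        have Pg: "\<Phi> g = G z (ra @ [rep z (cplus A B)] @ rb) - G z (ra @ [rep z A] @ rb) - G z (ra @ [rep z B] @ rb)"
          unfolding g using linP by (simp add: lin_diff fs_delta fs_diff Pd ra_def rb_def fun_eq_iff)
        have AB: "A \<in> quotZ z" "B \<in> quotZ z" using st by auto
        have cq: "cplus A B \<in> quotZ z"
          using cplus_zcoset[of z "rep z A" "rep z B"] rep_zc[OF AB(1)] rep_zc[OF AB(2)] by (simp add: zc_quot)
        have zr: "zcoset z (rep z (cplus A B)) = zcoset z (rep z A + rep z B)"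
          using rep_zc[OF cq] cplus_zcoset[of z "rep z A" "rep z B"] rep_zc[OF AB(1)] rep_zc[OF AB(2)] by simp
        have l: "length ra + 1 + length rb + 1 = p" using len pl by (simp add: ra_def rb_def)
        have s1: "G z (ra @ [rep z (cplus A B)] @ rb) - G z (ra @ [rep z A + rep z B] @ rb) \<in> Sp p"
          by (rule G2[OF l zr])
        have s2: "G z (ra @ [rep z A + rep z B] @ rb) - G z (ra @ [rep z A] @ rb) - G z (ra @ [rep z B] @ rb) \<in> Sp p"
          by (rule G1[OF l])
        have "\<Phi> g = (G z (ra @ [rep z (cplus A B)] @ rb) - G z (ra @ [rep z A + rep z B] @ rb))
          + (G z (ra @ [rep z A + rep z B] @ rb) - G z (ra @ [rep z A] @ rb) - G z (ra @ [rep z B] @ rb))"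
          unfolding Pg by (simp only: diff_add_cancel add_diff_eq)
        then have inS: "\<Phi> g \<in> Sp p" using Sp_add[OF s1 s2] by simp
        have lc: "length (ra @ [t] @ rb) + 1 = p" for t using l by simp
        have inC: "\<Phi> g \<in> C_gen p z" unfolding Pg by (intro C_diff G_C lc)
        show ?thesis using fsg inS inC by (simp add: Ih_def)
      next
        assume "g \<in> {delta (as @ [A, A] @ bs)
          | as A bs. length as + 2 + length bs = p - 1 \<and> set (as @ [A] @ bs) \<subseteq> quotZ z}"
        then obtain as A bs where g: "g = delta (as @ [A, A] @ bs)"
          and len: "length as + 2 + length bs = p - 1" by blast
        define ra where "ra = map (rep z) as"
        define rb where "rb = map (rep z) bs"
        define w where "w = z - sum_list (ra @ [rep z A, rep z A] @ rb)"
        have Pg: "\<Phi> g = delta (ra @ [rep z A, rep z A] @ (rb @ [w]))"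
          unfolding g by (simp add: Pd G_def ra_def rb_def w_def)
        have inS: "\<Phi> g \<in> Sp p" unfolding Pg by (rule S_alt) (use len pl in \<open>simp add: ra_def rb_def\<close>)
        have inC: "\<Phi> g \<in> C_gen p z" unfolding g Pd
          by (rule G_C) (use len pl in simp)
        show ?thesis using inS inC by (simp add: Ih_def g fs_delta)
      qed
    qed
    then show "y \<in> Ihat_lift p z" using x by simp
  qed
  have c6: "\<Psi> ` C_gen p z \<subseteq> W_gen z (p - 1)"
  proof
    fix y assume "y \<in> \<Psi> ` C_gen p z"
    then obtain x where x: "x \<in> C_gen p z" "y = \<Psi> x" by auto
    have "\<Psi> x \<in> W_gen z (p-1)"
    proof (rule lin_image[OF linS _ _ x(1)[unfolded Cg_def]])
      show "Q.subspace (W_gen z (p-1))" by (simp add: Wg_def)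
    next
      fix g assume "g \<in> {delta us |us. length us = p \<and> sum_list us = z}"
      then obtain us where g: "g = delta us" and l: "length us = p" "sum_list us = z" by blast
      have "delta (map (zcoset z) (take (p - 1) us)) \<in> W_gen z (p-1)"
        unfolding Wg_def
        apply (rule Q.span_base, rule CollectI)
        apply (rule exI[of _ "map (zcoset z) (take (p - 1) us)"])
        using l by auto
      then show "fs g \<and> \<Psi> g \<in> W_gen z (p-1)"
        using l by (simp add: g fs_delta Sd F_eq E_def)
    qed
    then show "y \<in> W_gen z (p-1)" using x by simp
  qed
  have c7: "\<Psi> ` Ihat_lift p z \<subseteq> W_rels z (p - 1)"
  proof
    fix y assume "y \<in> \<Psi> ` Ihat_lift p z"
    then obtain x where x: "x \<in> Sp p" "y = \<Psi> x" by (auto simp: Ih_def)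
    have "\<Psi> x \<in> W_rels z (p-1)"
    proof (rule lin_image[OF linS T_sub _ x(1)[unfolded Sp_def]])
      fix g :: "'a list \<Rightarrow> rat" assume "g \<in> alt_rels p \<union> ihat_rels p"
      then consider
        (a) as h bs where "g = delta (as @ [h, h] @ bs)" "length as + 2 + length bs = p"
      | (b) as h k bs where "g = delta (as @ [h, k] @ bs) + delta (as @ [k, h] @ bs)" "length as + 2 + length bs = p"
      | (c) as u v x bs where "g = delta (as @ [u + v, x] @ bs) - delta (as @ [u, x + v] @ bs) - delta (as @ [v, x + u] @ bs)"
            "length as + 2 + length bs = p"
      proof -
        have "g \<in> {delta (as @ [h, h] @ bs) | as h bs. length as + 2 + length bs = p} \<or>
          g \<in> {delta (as @ [h, k] @ bs) + delta (as @ [k, h] @ bs) | as h k bs. length as + 2 + length bs = p} \<or>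
          g \<in> ihat_rels p" using \<open>g \<in> alt_rels p \<union> ihat_rels p\<close> unfolding alt_rels_def Un_iff by (elim disjE) simp_all
        moreover
        { assume "g \<in> {delta (as @ [h, h] @ bs) | as h bs. length as + 2 + length bs = p}"
          then obtain as h bs where "g = delta (as @ [h, h] @ bs)" "length as + 2 + length bs = p" by blast
          then have thesis using that(1) by blast }
        moreover
        { assume "g \<in> {delta (as @ [h, k] @ bs) + delta (as @ [k, h] @ bs) | as h k bs. length as + 2 + length bs = p}"
          then obtain as h k bs where "g = delta (as @ [h, k] @ bs) + delta (as @ [k, h] @ bs)" "length as + 2 + length bs = p" by blast
          then have thesis using that(2) by blast }
        moreover
        { assume "g \<in> ihat_rels p"
          then obtain as u v x bs where "g = delta (as @ [u + v, x] @ bs) - delta (as @ [u, x + v] @ bs) - delta (as @ [v, x + u] @ bs)"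
            "length as + 2 + length bs = p" unfolding ihat_rels_def by blast
          then have thesis using that(3) by blast }
        ultimately show thesis by blast
      qed
      then show "fs g \<and> \<Psi> g \<in> W_rels z (p-1)"
      proof cases
        case a then show ?thesis using Psi_alt[OF a(2)] by (simp add: Sd fs_delta)
      next
        case b
        have fsg: "fs g" unfolding b(1) by (intro fs_add fs_delta)
        have e: "\<Psi> g = \<Psi> (delta (as @ [h, k] @ bs)) + \<Psi> (delta (as @ [k, h] @ bs))"
          unfolding b(1) by (rule lin_add[OF linS fs_delta fs_delta])
        show ?thesis using fsg Psi_swap[OF b(2), of z h k] unfolding e Sd by blast
      next
        case c
        have fsg: "fs g" unfolding c(1) by (intro fs_diff fs_delta)
        have e: "\<Psi> g = \<Psi> (delta (as @ [u + v, x] @ bs)) - \<Psi> (delta (as @ [u, x + v] @ bs)) - \<Psi> (delta (as @ [v, x + u] @ bs))"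
          unfolding c(1) by (simp only: lin_diff[OF linS] fs_delta fs_diff)
        show ?thesis using fsg Psi_ihat[OF c(2), of z u v x] unfolding e Sd by blast
      qed
    qed
    then show "y \<in> W_rels z (p-1)" using x by simp
  qed
  have c8: "\<Psi> (delta us) = delta (map (zcoset z) (take (p - 1) us))"
    if "length us = p \<and> sum_list us = z" for us
    using that by (simp add: Sd F_eq E_def)
  have c9: "\<Psi> (\<Phi> x) - x \<in> W_rels z (p - 1)" if x: "x \<in> W_gen z (p - 1)" for x
  proof (rule lin_image[OF lin_comp_id[OF linP linS fsP] T_sub _ x[unfolded Wg_def]])
    fix g assume "g \<in> {delta cs |cs. length cs = p - 1 \<and> set cs \<subseteq> quotZ z}"
    then obtain cs where g: "g = delta cs" and l: "length cs = p - 1" "set cs \<subseteq> quotZ z" by blast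
    define rs where "rs = map (rep z) cs"
    have m: "map (zcoset z) rs = cs" unfolding rs_def using l(2)
      by (induction cs) (auto simp: rep_zc)
    have "\<Psi> (\<Phi> g) = Fpsi p z (rs @ [z - sum_list rs])" by (simp add: g Pd G_def Sd rs_def)
    also have "\<dots> = E z rs" using l(1) pl by (simp add: F_eq rs_def)
    also have "\<dots> = g" by (simp add: E_def m g)
    finally show "fs g \<and> \<Psi> (\<Phi> g) - g \<in> W_rels z (p-1)" by (simp add: g fs_delta)
  qed
  have c10: "\<Phi> (\<Psi> y) - y \<in> Ihat_lift p z" if y: "y \<in> C_gen p z" for y
  proof (rule lin_image[OF lin_comp_id[OF linS linP fsS] Ih_sub _ y[unfolded Cg_def]])
    fix g assume "g \<in> {delta us |us. length us = p \<and> sum_list us = z}"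
    then obtain us where g: "g = delta us" and l: "length us = p" "sum_list us = z" by blast
    define vs where "vs = take (p-1) us"
    have us: "us = vs @ [z - sum_list vs]"
    proof -
      have u0: "us = vs @ drop (p-1) us" by (simp add: vs_def)
      have "length (drop (p-1) us) = 1" using l(1) p_pos by simp
      moreover have "\<And>xs::'a list. length xs = 1 \<Longrightarrow> \<exists>d. xs = [d]"
        by (case_tac xs) auto
      ultimately obtain d where "drop (p-1) us = [d]" by blast
      with u0 have u: "us = vs @ [d]" by simp
      then have "d = z - sum_list vs" using l(2) by (simp add: algebra_simps)
      then show ?thesis using u by simp
    qed
    have lv: "length vs = p - 1" using l(1) by (simp add: vs_def)
    have pe: "\<Psi> g = delta (map (zcoset z) vs)" using l by (simp add: g Sd F_eq E_def vs_def)
    have ge: "g = delta (vs @ [z - sum_list vs])" using g us by simp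
    have "\<Phi> (\<Psi> g) - g = \<Phi> (delta (map (zcoset z) vs)) - delta (vs @ [z - sum_list vs])"
      unfolding pe by (subst ge) (rule refl)
    then show "fs g \<and> \<Phi> (\<Psi> g) - g \<in> Ihat_lift p z" using c4[OF lv] by (simp add: g fs_delta)
  qed
  show ?thesis
    apply (rule exI[of _ \<Phi>], rule exI[of _ \<Psi>])
    apply (intro conjI allI impI ballI)
    apply (rule lin_qlinear[OF linP fsWg], assumption)
    apply (rule c2)
    apply (rule c3)
    apply (erule c4)
    apply (rule lin_qlinear[OF linS fsCg], assumption)
    apply (rule c6)
    apply (rule c7)
    apply (erule c8)
    apply (erule c9)
    apply (erule c10)
    done
qed

end
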